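(* Let $K$ be a nonempty compact subset of $\mathbb R^d$. For every $t>\underline{\dim}_B(K)$ and every $\alpha>0$ there exist $\mu\in\mathcal P(K)$ and $r\in(0,\alpha)$ such that $\mu(B(x,r))\ge2^{-t}r^t$ for all $x\in K$.
   Context: $\mathcal P(K)$ is the set of Borel probability measures on $K$, $B(x,r)$ the open ball, and $\underline{\dim}_B$ the lower box dimension. *)

theory Defs
  imports "HOL-Probability.Probability"
begin

definition covering_number :: "'a::metric_space set \<Rightarrow> real \<Rightarrow> nat" where
  "covering_number K r = (LEAST n. \<exists>C. finite C \<and> card C = n \<and> K \<subseteq> (\<Union>c\<in>C. cball c r))"

definition lower_box_dim :: "'a::metric_space set \<Rightarrow> ereal" where
  "lower_box_dim K = Liminf (at_right 0)
     (\<lambda>r. ereal (ln (real (covering_number K r)) / (- ln r)))"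

end

theory Submission
  imports Defs
begin

lemma cover_exists:
  fixes K :: "'a::euclidean_space set"
  assumes "compact K" "r > 0"
  shows "\<exists>C. finite C \<and> K \<subseteq> (\<Union>c\<in>C. cball c r)"
proof -
  obtain k where "finite k" "K \<subseteq> (\<Union>x\<in>k. ball x r)"
    using seq_compact_imp_totally_bounded[OF compact_imp_seq_compact[OF assms(1)]] assms(2) by blast
  then show ?thesis by (intro exI[of _ k]) force
qed

lemma cover_N:
  fixes K :: "'a::euclidean_space set"
  assumes "compact K" "r > 0"
  shows "\<exists>C. finite C \<and> card C = covering_number K r \<and> K \<subseteq> (\<Union>c\<in>C. cball c r)"
proof -
  obtain C where "finite C \<and> K \<subseteq> (\<Union>c\<in>C. cball c r)" using cover_exists[OF assms] by blast
  hence ex: "\<exists>n C. finite C \<and> card C = n \<and> K \<subseteq> (\<Union>c\<in>C. cball c r)" by blast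
  show ?thesis unfolding covering_number_def by (rule LeastI_ex[OF ex])
qed

lemma N_pos:
  fixes K :: "'a::euclidean_space set"
  assumes "compact K" "r > 0" "K \<noteq> {}"
  shows "covering_number K r \<ge> 1"
proof -
  obtain C where C: "finite C" "card C = covering_number K r" "K \<subseteq> (\<Union>c\<in>C. cball c r)"
    using cover_N[OF assms(1,2)] by blast
  then have "C \<noteq> {}" using assms(3) by auto
  then have "card C > 0" using C(1) by (simp add: card_gt_0_iff)
  then show ?thesis using C(2) by simp
qed

theorem lemma2p12:
  fixes K :: "'a::euclidean_space set" and t \<alpha> :: real
  assumes "compact K" and "K \<noteq> {}"
    and "ereal t > lower_box_dim K" and "\<alpha> > 0"
  shows "\<exists>\<mu> :: 'a measure. \<exists>r.
           prob_space \<mu> \<and> sets \<mu> = sets borel \<and> emeasure \<mu> K = 1 \<and>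
           0 < r \<and> r < \<alpha> \<and>
           (\<forall>x\<in>K. measure \<mu> (ball x r) \<ge> 2 powr (-t) * r powr t)"
proof -
  define f where "f = (\<lambda>r. ereal (ln (real (covering_number K r)) / (- ln r)))"
  define \<epsilon> where "\<epsilon> = min (\<alpha>/2) (1/2)"
  have \<epsilon>: "\<epsilon> > 0" "\<epsilon> \<le> \<alpha>/2" "\<epsilon> < 1" using assms(4) by (auto simp: \<epsilon>_def)
  have "\<exists>r0. 0 < r0 \<and> r0 < \<epsilon> \<and> f r0 < ereal t"
  proof (rule ccontr)
    assume "\<not> ?thesis"
    then have "eventually (\<lambda>r. ereal t \<le> f r) (at_right 0)"
      unfolding eventually_at_right_field using \<epsilon>(1) by (intro exI[of _ \<epsilon>]) (metis not_le)
    then have "ereal t \<le> lower_box_dim K"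
      unfolding lower_box_dim_def f_def[symmetric] by (rule Liminf_bounded)
    then show False using assms(3) by simp
  qed
  then obtain r0 where r0: "0 < r0" "r0 < \<epsilon>" "f r0 < ereal t" by blast
  define N where "N = covering_number K r0"
  have N1: "N \<ge> 1" unfolding N_def using N_pos[OF assms(1) r0(1) assms(2)] .
  have lnr0: "ln r0 < 0" using r0 \<epsilon> by simp
  have q: "ln (real N) / (- ln r0) < t" using r0(3) by (simp add: f_def N_def)
  have lnN: "ln (real N) \<ge> 0" using N1 by simp
  have tpos: "t > 0"
  proof -
    have "0 \<le> ln (real N) / (- ln r0)" using lnN lnr0 by (simp add: divide_nonneg_neg)
    then show ?thesis using q by linarith
  qed
  have "ln (real N) < t * (- ln r0)" using q lnr0 pos_divide_less_eq[of "- ln r0" "ln (real N)" t] by simp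
  hence "ln (real N) < ln (r0 powr (-t))" using r0(1) by (simp add: ln_powr)
  moreover have "0 < real N" using N1 by simp
  moreover have "0 < r0 powr (-t)" using r0(1) by simp
  ultimately have Nlt: "real N < r0 powr (-t)" by (simp only: ln_less_cancel_iff)
  obtain C where C: "finite C" "card C = N" "K \<subseteq> (\<Union>c\<in>C. cball c r0)"
    using cover_N[OF assms(1) r0(1)] unfolding N_def by blast
  define C' where "C' = {c\<in>C. K \<inter> cball c r0 \<noteq> {}}"
  define y where "y = (\<lambda>c. SOME z. z \<in> K \<inter> cball c r0)"
  have y: "y c \<in> K \<inter> cball c r0" if "c \<in> C'" for c
  proof -
    have "\<exists>z. z \<in> K \<inter> cball c r0" using that unfolding C'_def by blast
    then show ?thesis unfolding y_def by (rule someI_ex)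
  qed
  define Y where "Y = y ` C'"
  have Yfin: "finite Y" unfolding Y_def C'_def using C(1) by simp
  have YK: "Y \<subseteq> K" unfolding Y_def using y by auto
  have cardY: "card Y \<le> N"
  proof -
    have "card Y \<le> card C'" unfolding Y_def by (rule card_image_le) (use C(1) in \<open>simp add: C'_def\<close>)
    also have "\<dots> \<le> card C" unfolding C'_def by (rule card_mono[OF C(1)]) auto
    finally show ?thesis using C(2) by simp
  qed
  have near: "\<exists>z\<in>Y. dist x z \<le> 2 * r0" if xK: "x \<in> K" for x
  proof -
    obtain c where c: "c \<in> C" "x \<in> cball c r0" using C(3) xK by blast
    then have cC': "c \<in> C'" unfolding C'_def using xK by auto
    have "dist x (y c) \<le> dist x c + dist c (y c)" by (rule dist_triangle)
    also have "\<dots> \<le> 2 * r0" using c y[OF cC'] by (simp add: dist_commute)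
    finally show ?thesis using cC' unfolding Y_def by blast
  qed
  have Yne: "Y \<noteq> {}" using near assms(2) by blast
  define s where "s = min (real N powr (-1/t)) (\<alpha>/2)"
  have "real N powr (-1/t) > (r0 powr (-t)) powr (-1/t)"
    by (rule powr_less_mono2_neg) (use Nlt N1 tpos in auto)
  also have "(r0 powr (-t)) powr (-1/t) = r0" using tpos r0(1) by (simp add: powr_powr)
  finally have sgt: "s > r0" unfolding s_def using r0 \<epsilon> by simp
  define r where "r = r0 + s"
  have r: "0 < r" "r < \<alpha>" "2 * r0 < r" "r / 2 \<le> s"
    using sgt r0 \<epsilon> by (auto simp: r_def s_def)
  have bound: "2 powr (-t) * r powr t \<le> 1 / real N"
  proof -
    have "2 powr (-t) * r powr t = (r/2) powr t"
      using r(1) by (simp add: powr_divide powr_minus_divide)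
    also have "\<dots> \<le> s powr t" using r tpos by (intro powr_mono2) auto
    also have "\<dots> \<le> (real N powr (-1/t)) powr t" using sgt r0 tpos by (intro powr_mono2) (auto simp: s_def)
    also have "\<dots> = real N powr (-1/t * t)" by (simp only: powr_powr)
    also have "-1/t * t = -1" using tpos by simp
    also have "real N powr (-1) = 1 / real N" using N1 by (simp add: powr_minus_divide)
    finally show ?thesis .
  qed
  define p where "p = pmf_of_set Y"
  define \<mu> where "\<mu> = distr (measure_pmf p) borel id"
  have meas: "id \<in> measurable (measure_pmf p) borel" by simp
  have sets\<mu>: "sets \<mu> = sets borel" unfolding \<mu>_def by simp
  have prob: "prob_space \<mu>" unfolding \<mu>_def
    by (rule prob_space.prob_space_distr[OF measure_pmf.prob_space_axioms meas])
  have em: "emeasure \<mu> A = emeasure (measure_pmf p) A" if "A \<in> sets borel" for A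
    unfolding \<mu>_def using that by (simp add: emeasure_distr)
  have me: "measure \<mu> A = card (Y \<inter> A) / card Y" if "A \<in> sets borel" for A
    unfolding \<mu>_def using that Yfin Yne by (simp add: measure_distr p_def measure_pmf_of_set)
  have "emeasure \<mu> K = card (Y \<inter> K) / card Y"
    using em[of K] compact_imp_closed[OF assms(1)] Yfin Yne by (simp add: p_def emeasure_pmf_of_set)
  also have "\<dots> = 1" using YK Yfin Yne
    by (simp add: Int_absorb2 divide_ennreal ennreal_of_nat_eq_real_of_nat[symmetric] card_gt_0_iff)
  finally have emK: "emeasure \<mu> K = 1" .
  have main: "measure \<mu> (ball x r) \<ge> 2 powr (-t) * r powr t" if xK: "x \<in> K" for x
  proof -
    obtain z where z: "z \<in> Y" "dist x z \<le> 2 * r0" using near xK by blast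
    have "z \<in> Y \<inter> ball x r" using z r(3) by auto
    hence "card (Y \<inter> ball x r) \<ge> 1" using Yfin by (metis One_nat_def Suc_leI card_gt_0_iff empty_iff finite_Int)
    moreover have "card Y > 0" using Yfin Yne by (simp add: card_gt_0_iff)
    ultimately have "1 / real N \<le> card (Y \<inter> ball x r) / card Y"
      using cardY N1 by (simp add: frac_le)
    then show ?thesis using bound me[of "ball x r"] by simp
  qed
  show ?thesis using prob sets\<mu> emK r(1,2) main by blast
qed

end
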